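(* Let $A,B\in M_2(\mathbb C)$ be nonzero normal matrices. Then $\|A+B\|_2=\|A\|_2+\|B\|_2$ holds if and only if $A$ and $B$ are aligned or skew-aligned. These two cases are mutually exclusive; aligned pairs commute and skew-aligned pairs do not commute.
   Context: $\|\cdot\|_2$ is the operator norm. Normal matrices $A,B$ are aligned if, after a simultaneous unitary conjugation, $A=r_1e^{i\eta}\operatorname{diag}(1,t_1)$ and $B=r_2e^{i\eta}\operatorname{diag}(1,t_2)$ with $r_1,r_2>0$, $\eta\in[0,2\pi)$, $t_1,t_2$ in the closed unit disk. They are skew-aligned if, after a simultaneous unitary conjugation, $A=r_1\begin{pmatrix}e^{i\eta}\cos t&-e^{i\theta}\sin t\\ e^{i\eta}\sin t&e^{i\theta}\cos t\end{pmatrix}$, $B=r_2\begin{pmatrix}e^{i\eta}\cos t&-e^{i\phi}\sin t\\ e^{i\eta}\sin t&e^{i\phi}\cos t\end{pmatrix}$ with $r_1,r_2>0$, $t\in(0,\pi)$, $\eta,\theta,\phi\in[0,2\pi)$, $\phi\ne\theta$. *)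

theory Defs
  imports "HOL-Analysis.Analysis"
begin

text \<open>2x2 complex matrices are modelled as complex^2^2 (rows indexed by 1,2),
  acting on column vectors in complex^2 equipped with the Euclidean norm.\<close>

type_synonym cmat2 = "complex ^ 2 ^ 2"

definition mat2 :: "complex \<Rightarrow> complex \<Rightarrow> complex \<Rightarrow> complex \<Rightarrow> cmat2" where
  "mat2 a b c d = (\<chi> i j. if i = 1 then (if j = 1 then a else b) else (if j = 1 then c else d))"

definition cadj :: "cmat2 \<Rightarrow> cmat2" where
  "cadj A = (\<chi> i j. cnj (A $ j $ i))"

definition unitary2 :: "cmat2 \<Rightarrow> bool" where
  "unitary2 U \<longleftrightarrow> U ** cadj U = mat 1 \<and> cadj U ** U = mat 1"

definition normal2 :: "cmat2 \<Rightarrow> bool" where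
  "normal2 A \<longleftrightarrow> A ** cadj A = cadj A ** A"

definition opnorm2 :: "cmat2 \<Rightarrow> real" where
  "opnorm2 A = onorm (\<lambda>x :: complex ^ 2. A *v x)"

definition aligned :: "cmat2 \<Rightarrow> cmat2 \<Rightarrow> bool" where
  "aligned A B \<longleftrightarrow> (\<exists>U r1 r2 \<eta> t1 t2. unitary2 U \<and> r1 > 0 \<and> r2 > 0 \<and>
     0 \<le> \<eta> \<and> \<eta> < 2 * pi \<and> cmod t1 \<le> 1 \<and> cmod t2 \<le> 1 \<and>
     cadj U ** A ** U = mat2 (of_real r1 * cis \<eta>) 0 0 (of_real r1 * cis \<eta> * t1) \<and>
     cadj U ** B ** U = mat2 (of_real r2 * cis \<eta>) 0 0 (of_real r2 * cis \<eta> * t2))"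

definition skew_aligned :: "cmat2 \<Rightarrow> cmat2 \<Rightarrow> bool" where
  "skew_aligned A B \<longleftrightarrow> (\<exists>U r1 r2 t \<eta> \<theta> \<phi>. unitary2 U \<and> r1 > 0 \<and> r2 > 0 \<and>
     0 < t \<and> t < pi \<and> 0 \<le> \<eta> \<and> \<eta> < 2 * pi \<and> 0 \<le> \<theta> \<and> \<theta> < 2 * pi \<and>
     0 \<le> \<phi> \<and> \<phi> < 2 * pi \<and> \<phi> \<noteq> \<theta> \<and>
     cadj U ** A ** U = mat2 (of_real r1 * cis \<eta> * cos t) (- of_real r1 * cis \<theta> * sin t)
                             (of_real r1 * cis \<eta> * sin t) (of_real r1 * cis \<theta> * cos t) \<and>
     cadj U ** B ** U = mat2 (of_real r2 * cis \<eta> * cos t) (- of_real r2 * cis \<phi> * sin t)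
                             (of_real r2 * cis \<eta> * sin t) (of_real r2 * cis \<phi> * cos t))"

end

theory Submission
  imports Defs
begin


definition v2 :: "complex \<Rightarrow> complex \<Rightarrow> complex^2" where
  "v2 x y = (\<chi> i. if i = 1 then x else y)"

lemma two_ne: "(1::2) \<noteq> 2" by simp

lemma mat2_nth[simp]: "mat2 a b c d $ 1 $ 1 = a" "mat2 a b c d $ 1 $ 2 = b"
  "mat2 a b c d $ 2 $ 1 = c" "mat2 a b c d $ 2 $ 2 = d"
  by (simp_all add: mat2_def)

lemma v2_nth[simp]: "v2 x y $ 1 = x" "v2 x y $ 2 = y"
  by (simp_all add: v2_def)

lemma mat2_eta: "A = mat2 (A$1$1) (A$1$2) (A$2$1) (A$2$2)"
  by (simp add: vec_eq_iff forall_2)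

lemma v2_eta: "y = v2 (y$1) (y$2)"
  by (simp add: vec_eq_iff forall_2)

lemma mat2_inject[simp]: "mat2 a b c d = mat2 a' b' c' d' \<longleftrightarrow> a = a' \<and> b = b' \<and> c = c' \<and> d = d'"
  by (metis mat2_nth)

lemma v2_inject[simp]: "v2 a b = v2 a' b' \<longleftrightarrow> a = a' \<and> b = b'"
  by (metis v2_nth)

lemma mat2_mult[simp]: "mat2 a b c d ** mat2 e f g h = mat2 (a*e+b*g) (a*f+b*h) (c*e+d*g) (c*f+d*h)"
  by (subst mat2_eta) (simp add: matrix_matrix_mult_def sum_2)

lemma mat2_mv[simp]: "mat2 a b c d *v v2 x y = v2 (a*x+b*y) (c*x+d*y)"
  by (subst v2_eta) (simp add: matrix_vector_mult_def sum_2)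

lemma cadj_mat2[simp]: "cadj (mat2 a b c d) = mat2 (cnj a) (cnj c) (cnj b) (cnj d)"
  by (subst mat2_eta) (simp add: cadj_def)

lemma mat2_add[simp]: "mat2 a b c d + mat2 e f g h = mat2 (a+e) (b+f) (c+g) (d+h)"
  by (subst mat2_eta) simp

lemma mat2_zero: "(0::cmat2) = mat2 0 0 0 0"
  by (subst mat2_eta) simp

lemma mat2_one: "(mat 1::cmat2) = mat2 1 0 0 1"
  by (subst mat2_eta) (simp add: mat_def)

lemma norm_v2: "norm (v2 x y) = sqrt (cmod x ^ 2 + cmod y ^ 2)"
  by (simp add: norm_vec_def L2_set_def sum_2)



lemma cmod_sq_add: "cmod (x + y) ^ 2 = cmod x ^ 2 + cmod y ^ 2 + 2 * Re (cnj x * y)"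
  unfolding cmod_power2 by (simp add: power2_eq_square algebra_simps)

lemma cmod_sq_mult: "cmod (x * y) ^ 2 = cmod x ^ 2 * cmod y ^ 2"
  by (simp add: norm_mult power_mult_distrib)

lemma quad_form: "norm (mat2 a b c d *v v2 y1 y2) ^ 2 =
   (cmod a ^ 2 + cmod c ^ 2) * cmod y1 ^ 2 + (cmod b ^ 2 + cmod d ^ 2) * cmod y2 ^ 2
   + 2 * Re (cnj y1 * y2 * (cnj a * b + cnj c * d))"
proof -
  have "norm (mat2 a b c d *v v2 y1 y2) ^ 2 = cmod (a * y1+b * y2)^2 + cmod (c * y1+d * y2)^2"
    unfolding mat2_mv norm_v2 by simp
  also have "\<dots> = (cmod a ^ 2 + cmod c ^ 2) * cmod y1 ^ 2 + (cmod b ^ 2 + cmod d ^ 2) * cmod y2 ^ 2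
   + 2 * (Re (cnj (a * y1) * (b * y2)) + Re (cnj (c * y1) * (d * y2)))"
    unfolding cmod_sq_add cmod_sq_mult by (simp add: algebra_simps)
  also have "Re (cnj (a * y1) * (b * y2)) + Re (cnj (c * y1) * (d * y2)) = Re (cnj y1 * y2 * (cnj a * b + cnj c * d))"
    by (simp add: algebra_simps)
  finally show ?thesis .
qed

lemma mat2_ex: "\<exists>a b c d. A = mat2 a b c d"
  using mat2_eta by blast

lemma cadj_mult: "cadj (X ** Y) = cadj Y ** cadj X"
proof -
  obtain a b c d where X: "X = mat2 a b c d" using mat2_ex by blast
  obtain e f g h where Y: "Y = mat2 e f g h" using mat2_ex by blast
  show ?thesis unfolding X Y by (simp add: algebra_simps)
qed

lemma cadj_cadj[simp]: "cadj (cadj X) = X"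
  by (simp add: cadj_def vec_eq_iff)

lemma cadj_add: "cadj (X + Y) = cadj X + cadj Y"
  by (simp add: cadj_def vec_eq_iff)

lemma cmod_sq_eq: "complex_of_real (cmod z ^ 2) = cnj z * z"
  by (metis complex_norm_square mult.commute of_real_power)

lemma unitary_cols:
  assumes "unitary2 (mat2 a b c d)"
  shows "cmod a ^ 2 + cmod c ^ 2 = 1" "cmod b ^ 2 + cmod d ^ 2 = 1" "cnj a * b + cnj c * d = 0"
proof -
  have e: "cnj a * a + cnj c * c = 1" "cnj b * b + cnj d * d = 1" "cnj a * b + cnj c * d = 0"
    using assms unfolding unitary2_def mat2_one by simp_all
  have "complex_of_real (cmod a ^ 2 + cmod c ^ 2) = 1"
    using e(1) by (simp only: of_real_add cmod_sq_eq)
  then show "cmod a ^ 2 + cmod c ^ 2 = 1" by (metis of_real_eq_1_iff)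
  have "complex_of_real (cmod b ^ 2 + cmod d ^ 2) = 1"
    using e(2) by (simp only: of_real_add cmod_sq_eq)
  then show "cmod b ^ 2 + cmod d ^ 2 = 1" by (metis of_real_eq_1_iff)
  show "cnj a * b + cnj c * d = 0" by (fact e(3))
qed

lemma unitary_norm:
  assumes "unitary2 U" shows "norm (U *v y) = norm y"
proof -
  obtain a b c d where U: "U = mat2 a b c d" using mat2_ex by blast
  obtain y1 y2 where y: "y = v2 y1 y2" using v2_eta by blast
  have "norm (U *v y) ^ 2 = norm y ^ 2"
    unfolding U y quad_form using unitary_cols[OF assms[unfolded U]]
    by (simp add: norm_v2)
  then show ?thesis by (simp add: power2_eq_iff_nonneg)
qed

lemma unitary_l: "unitary2 U \<Longrightarrow> X ** U ** cadj U = X"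
  unfolding unitary2_def by (simp flip: matrix_mul_assoc)

lemma unitary_r: "unitary2 U \<Longrightarrow> X ** cadj U ** U = X"
  unfolding unitary2_def by (simp flip: matrix_mul_assoc)

lemma unitary_1: "unitary2 U \<Longrightarrow> U ** cadj U = mat 1" "unitary2 U \<Longrightarrow> cadj U ** U = mat 1"
  unfolding unitary2_def by simp_all

lemma conj_back:
  assumes "unitary2 U" "cadj U ** A ** U = M"
  shows "A = U ** M ** cadj U"
proof -
  show ?thesis using assms by (auto simp: matrix_mul_assoc unitary_l unitary_r unitary_1)
qed

lemma normal_conj:
  assumes "unitary2 U" "normal2 A"
  shows "normal2 (cadj U ** A ** U)"
proof -
  have "(cadj U ** A ** U) ** cadj (cadj U ** A ** U) = cadj U ** (A ** cadj A) ** U"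
    using assms(1) by (simp add: cadj_mult matrix_mul_assoc unitary_l unitary_r unitary_1)
  also have "\<dots> = cadj U ** (cadj A ** A) ** U" using assms(2) unfolding normal2_def by simp
  also have "\<dots> = cadj (cadj U ** A ** U) ** (cadj U ** A ** U)"
    using assms(1) by (simp add: cadj_mult matrix_mul_assoc unitary_l unitary_r unitary_1)
  finally show ?thesis unfolding normal2_def .
qed

lemma opnorm_ge: "norm (A *v y) \<le> opnorm2 A * norm y"
  unfolding opnorm2_def by (rule onorm) simp

lemma opnorm_le: "(\<And>y. norm (A *v y) \<le> c * norm y) \<Longrightarrow> opnorm2 A \<le> c"
  unfolding opnorm2_def by (rule onorm_le)

lemma opnorm_triangle: "opnorm2 (A + B) \<le> opnorm2 A + opnorm2 B"
  unfolding opnorm2_def matrix_vector_mult_add_rdistrib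
  by (rule onorm_triangle) simp_all

lemma opnorm_conj:
  assumes "unitary2 U" shows "opnorm2 (cadj U ** A ** U) = opnorm2 A"
proof (rule antisym)
  show "opnorm2 (cadj U ** A ** U) \<le> opnorm2 A"
  proof (rule opnorm_le)
    fix y
    have "norm ((cadj U ** A ** U) *v y) = norm (cadj U *v (A *v (U *v y)))"
      by (simp add: matrix_vector_mul_assoc matrix_mul_assoc)
    also have "\<dots> = norm (A *v (U *v y))"
      using assms by (intro unitary_norm) (simp add: unitary2_def)
    also have "\<dots> \<le> opnorm2 A * norm (U *v y)" by (rule opnorm_ge)
    finally show "norm ((cadj U ** A ** U) *v y) \<le> opnorm2 A * norm y"
      using unitary_norm[OF assms] by simp
  qed
next
  show "opnorm2 A \<le> opnorm2 (cadj U ** A ** U)"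
  proof (rule opnorm_le)
    fix y
    have "A *v y = U *v ((cadj U ** A ** U) *v (cadj U *v y))"
      using assms by (simp add: matrix_vector_mul_assoc matrix_mul_assoc unitary_l unitary_r unitary_1)
    then have "norm (A *v y) = norm ((cadj U ** A ** U) *v (cadj U *v y))"
      using unitary_norm[OF assms] by simp
    also have "\<dots> \<le> opnorm2 (cadj U ** A ** U) * norm (cadj U *v y)" by (rule opnorm_ge)
    also have "norm (cadj U *v y) = norm y"
      using assms by (intro unitary_norm) (simp add: unitary2_def)
    finally show "norm (A *v y) \<le> opnorm2 (cadj U ** A ** U) * norm y" .
  qed
qed



lemma e1_norm: "norm (mat2 a b c d *v v2 1 0) = sqrt (cmod a ^ 2 + cmod c ^ 2)"
  by (simp add: norm_v2)

lemma opnorm_lower: "sqrt (cmod a ^ 2 + cmod c ^ 2) \<le> opnorm2 (mat2 a b c d)"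
  using opnorm_ge[of "mat2 a b c d" "v2 1 0"] by (simp add: norm_v2)

lemma opnorm_exact:
  assumes r: "r \<ge> 0" and c1: "cmod a ^ 2 + cmod c ^ 2 = r ^ 2" and c2: "cmod b ^ 2 + cmod d ^ 2 \<le> r ^ 2"
    and o: "cnj a * b + cnj c * d = 0"
  shows "opnorm2 (mat2 a b c d) = r"
proof (rule antisym)
  show "opnorm2 (mat2 a b c d) \<le> r"
  proof (rule opnorm_le)
    fix y
    obtain y1 y2 where y: "y = v2 y1 y2" using v2_eta by blast
    have "norm (mat2 a b c d *v y) ^ 2 \<le> (r * norm y) ^ 2"
      using mult_right_mono[OF c2, of "cmod y2 ^ 2"]
      unfolding y quad_form o c1
      by (simp add: norm_v2 power_mult_distrib algebra_simps)
    then show "norm (mat2 a b c d *v y) \<le> r * norm y"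
      using r by (simp add: power2_le_iff_abs_le)
  qed
next
  show "r \<le> opnorm2 (mat2 a b c d)" using opnorm_lower[of a c b d] c1 r by simp
qed

lemma cis_inj:
  assumes "cis x = cis y" "0 \<le> x" "x < 2 * pi" "0 \<le> y" "y < 2 * pi"
  shows "x = y"
proof -
  have "exp (\<i> * complex_of_real x) = exp (\<i> * complex_of_real y)"
    using assms(1) by (simp add: cis_conv_exp)
  then obtain n :: int where n: "\<i> * complex_of_real x = \<i> * complex_of_real y + of_int (2 * n) * pi * \<i>"
    unfolding exp_eq by blast
  then have "\<i> * complex_of_real x = \<i> * complex_of_real (y + 2 * n * pi)"
    by (simp add: algebra_simps)
  then have "complex_of_real x = complex_of_real (y + 2 * n * pi)"
    by (metis complex_i_not_zero mult_cancel_left)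
  then have xy: "x = y + 2 * n * pi" by (metis of_real_eq_iff)
  have "n = 0"
  proof (rule ccontr)
    assume "n \<noteq> 0"
    then have "n \<ge> 1 \<or> n \<le> -1" by linarith
    then show False
    proof
      assume "n \<ge> 1" then have "2 * n * pi \<ge> 2 * pi" by simp
      then show False using xy assms by linarith
    next
      assume "n \<le> -1" then have "real_of_int n \<le> -1" by simp
      then have "2 * n * pi \<le> - 2 * pi" using pi_gt_zero
      proof -
        have "real_of_int n * pi \<le> -1 * pi" using \<open>real_of_int n \<le> -1\<close> pi_gt_zero
          by (intro mult_right_mono) auto
        then show ?thesis by (simp add: mult.commute)
      qed
      then show False using xy assms by linarith
    qed
  qed
  then show ?thesis using xy by simp
qed

lemma conj_mult:
  assumes "unitary2 U"
  shows "(U ** X ** cadj U) ** (U ** Y ** cadj U) = U ** (X ** Y) ** cadj U"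
  using assms by (simp add: matrix_mul_assoc unitary_l unitary_r unitary_1)

lemma conj_inj:
  assumes "unitary2 U" "U ** X ** cadj U = U ** Y ** cadj U"
  shows "X = Y"
proof -
  have "cadj U ** (U ** X ** cadj U) ** U = cadj U ** (U ** Y ** cadj U) ** U" using assms(2) by simp
  then show ?thesis using assms(1) by (simp add: matrix_mul_assoc unitary_l unitary_r unitary_1)
qed

lemma conj_add:
  "cadj U ** (A + B) ** U = cadj U ** A ** U + cadj U ** B ** U"
proof -
  obtain a b c d where X: "A = mat2 a b c d" using mat2_ex by blast
  obtain e f g h where Y: "B = mat2 e f g h" using mat2_ex by blast
  obtain p q r s where U: "U = mat2 p q r s" using mat2_ex by blast
  show ?thesis unfolding X Y U by (simp add: algebra_simps)
qed



lemma cmod_rc: "r \<ge> 0 \<Longrightarrow> cmod (complex_of_real r * cis x) = r" 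
  by (simp add: norm_mult)

lemma aligned_props:
  assumes "aligned A B"
  shows "opnorm2 (A + B) = opnorm2 A + opnorm2 B \<and> A ** B = B ** A"
proof -
  obtain U r1 r2 \<eta> t1 t2 where U: "unitary2 U" and r: "r1 > 0" "r2 > 0"
    and t: "cmod t1 \<le> 1" "cmod t2 \<le> 1"
    and A': "cadj U ** A ** U = mat2 (of_real r1 * cis \<eta>) 0 0 (of_real r1 * cis \<eta> * t1)"
    and B': "cadj U ** B ** U = mat2 (of_real r2 * cis \<eta>) 0 0 (of_real r2 * cis \<eta> * t2)"
    using assms unfolding aligned_def by blast
  have t1: "cmod t1 ^ 2 \<le> 1" and t2: "cmod t2 ^ 2 \<le> 1" using t by (simp_all add: power_le_one)
  have nA: "opnorm2 A = r1"
    using opnorm_conj[OF U, of A] A' opnorm_exact[of r1 "of_real r1 * cis \<eta>" 0 0 "of_real r1 * cis \<eta> * t1"]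
      r mult_left_mono[OF t1, of "r1^2"]
    by (simp add: norm_mult power_mult_distrib)
  have nB: "opnorm2 B = r2"
    using opnorm_conj[OF U, of B] B' opnorm_exact[of r2 "of_real r2 * cis \<eta>" 0 0 "of_real r2 * cis \<eta> * t2"]
      r mult_left_mono[OF t2, of "r2^2"]
    by (simp add: norm_mult power_mult_distrib)
  have S: "cadj U ** (A + B) ** U = mat2 (of_real (r1 + r2) * cis \<eta>) 0 0 (of_real r1 * cis \<eta> * t1 + of_real r2 * cis \<eta> * t2)"
    unfolding conj_add A' B' by (simp add: algebra_simps)
  have "r1 + r2 \<le> opnorm2 (A + B)"
    using opnorm_lower[of "of_real (r1 + r2) * cis \<eta>" 0 0 "of_real r1 * cis \<eta> * t1 + of_real r2 * cis \<eta> * t2"]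
      opnorm_conj[OF U, of "A + B"] S r by (simp add: norm_mult flip: of_real_add)
  moreover have "opnorm2 (A + B) \<le> r1 + r2" using opnorm_triangle[of A B] nA nB by simp
  ultimately have n: "opnorm2 (A + B) = opnorm2 A + opnorm2 B" using nA nB by simp
  have "A ** B = U ** ((cadj U ** A ** U) ** (cadj U ** B ** U)) ** cadj U"
    using conj_mult[OF U] conj_back[OF U A'] conj_back[OF U B'] A' B' by simp
  also have "(cadj U ** A ** U) ** (cadj U ** B ** U) = (cadj U ** B ** U) ** (cadj U ** A ** U)"
    unfolding A' B' by (simp add: algebra_simps)
  also have "U ** \<dots> ** cadj U = B ** A"
    using conj_mult[OF U] conj_back[OF U A'] conj_back[OF U B'] A' B' by simp
  finally show ?thesis using n by simp
qed

lemma skew_props: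
  assumes "skew_aligned A B"
  shows "opnorm2 (A + B) = opnorm2 A + opnorm2 B \<and> A ** B \<noteq> B ** A"
proof -
  obtain U r1 r2 t \<eta> \<theta> \<phi> where U: "unitary2 U" and r: "r1 > 0" "r2 > 0"
    and t: "0 < t" "t < pi" and ang: "0 \<le> \<theta>" "\<theta> < 2 * pi" "0 \<le> \<phi>" "\<phi> < 2 * pi" "\<phi> \<noteq> \<theta>"
    and A': "cadj U ** A ** U = mat2 (of_real r1 * cis \<eta> * cos t) (- of_real r1 * cis \<theta> * sin t)
                             (of_real r1 * cis \<eta> * sin t) (of_real r1 * cis \<theta> * cos t)"
    and B': "cadj U ** B ** U = mat2 (of_real r2 * cis \<eta> * cos t) (- of_real r2 * cis \<phi> * sin t)
                             (of_real r2 * cis \<eta> * sin t) (of_real r2 * cis \<phi> * cos t)"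
    using assms unfolding skew_aligned_def by blast
  have sc: "sin t ^ 2 + cos t ^ 2 = 1" by simp
  have "opnorm2 (mat2 (of_real r1 * cis \<eta> * cos t) (- of_real r1 * cis \<theta> * sin t)
         (of_real r1 * cis \<eta> * sin t) (of_real r1 * cis \<theta> * cos t)) = r1"
  proof (rule opnorm_exact)
    show "0 \<le> r1" using r by simp
    show "(cmod (of_real r1 * cis \<eta> * cos t))\<^sup>2 + (cmod (of_real r1 * cis \<eta> * sin t))\<^sup>2 = r1\<^sup>2"
      using r by (simp add: norm_mult power_mult_distrib flip: distrib_left)
    show "(cmod (- of_real r1 * cis \<theta> * sin t))\<^sup>2 + (cmod (of_real r1 * cis \<theta> * cos t))\<^sup>2 \<le> r1\<^sup>2"
      using r by (simp add: norm_mult power_mult_distrib flip: distrib_left)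
    have "cis \<eta> * cnj (cis \<eta>) = 1" "cis \<theta> * cnj (cis \<theta>) = 1" by (simp_all add: cis_cnj cis_mult)
    show "cnj (of_real r1 * cis \<eta> * cos t) * (- of_real r1 * cis \<theta> * sin t) +
          cnj (of_real r1 * cis \<eta> * sin t) * (of_real r1 * cis \<theta> * cos t) = 0"
      by (simp add: algebra_simps)
  qed
  then have nA: "opnorm2 A = r1" using opnorm_conj[OF U, of A] A' by simp
  have "opnorm2 (mat2 (of_real r2 * cis \<eta> * cos t) (- of_real r2 * cis \<phi> * sin t)
         (of_real r2 * cis \<eta> * sin t) (of_real r2 * cis \<phi> * cos t)) = r2"
  proof (rule opnorm_exact)
    show "0 \<le> r2" using r by simp
    show "(cmod (of_real r2 * cis \<eta> * cos t))\<^sup>2 + (cmod (of_real r2 * cis \<eta> * sin t))\<^sup>2 = r2\<^sup>2"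
      using r by (simp add: norm_mult power_mult_distrib flip: distrib_left)
    show "(cmod (- of_real r2 * cis \<phi> * sin t))\<^sup>2 + (cmod (of_real r2 * cis \<phi> * cos t))\<^sup>2 \<le> r2\<^sup>2"
      using r by (simp add: norm_mult power_mult_distrib flip: distrib_left)
    have "cis \<eta> * cnj (cis \<eta>) = 1" "cis \<phi> * cnj (cis \<phi>) = 1" by (simp_all add: cis_cnj cis_mult)
    show "cnj (of_real r2 * cis \<eta> * cos t) * (- of_real r2 * cis \<phi> * sin t) +
          cnj (of_real r2 * cis \<eta> * sin t) * (of_real r2 * cis \<phi> * cos t) = 0"
      by (simp add: algebra_simps)
  qed
  then have nB: "opnorm2 B = r2" using opnorm_conj[OF U, of B] B' by simp
  let ?S = "mat2 (of_real (r1 + r2) * cis \<eta> * cos t) (- of_real r1 * cis \<theta> * sin t - of_real r2 * cis \<phi> * sin t)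
       (of_real (r1 + r2) * cis \<eta> * sin t) (of_real r1 * cis \<theta> * cos t + of_real r2 * cis \<phi> * cos t)"
  have S: "cadj U ** (A + B) ** U = ?S"
    unfolding conj_add A' B' by (simp add: algebra_simps)
  have "sqrt (cmod (of_real (r1 + r2) * cis \<eta> * cos t) ^ 2 + cmod (of_real (r1 + r2) * cis \<eta> * sin t) ^ 2) = r1 + r2"
    using r by (simp add: norm_mult power_mult_distrib flip: distrib_left of_real_add)
  moreover have "sqrt (cmod (of_real (r1 + r2) * cis \<eta> * cos t) ^ 2 + cmod (of_real (r1 + r2) * cis \<eta> * sin t) ^ 2) \<le> opnorm2 ?S"
    by (rule opnorm_lower)
  moreover have "opnorm2 ?S = opnorm2 (A + B)" using opnorm_conj[OF U, of "A + B"] S by simp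
  ultimately have "r1 + r2 \<le> opnorm2 (A + B)" by simp
  moreover have "opnorm2 (A + B) \<le> r1 + r2" using opnorm_triangle[of A B] nA nB by simp
  ultimately have n: "opnorm2 (A + B) = opnorm2 A + opnorm2 B" using nA nB by simp
  have "A ** B \<noteq> B ** A"
  proof
    assume AB: "A ** B = B ** A"
    have "U ** ((cadj U ** A ** U) ** (cadj U ** B ** U)) ** cadj U = U ** ((cadj U ** B ** U) ** (cadj U ** A ** U)) ** cadj U"
      using conj_mult[OF U] conj_back[OF U A'] conj_back[OF U B'] A' B' AB by metis
    then have "(cadj U ** A ** U) ** (cadj U ** B ** U) = (cadj U ** B ** U) ** (cadj U ** A ** U)"
      by (rule conj_inj[OF U])
    then have "(of_real r1 * cis \<eta> * cos t) * (of_real r2 * cis \<eta> * cos t) + (- of_real r1 * cis \<theta> * sin t) * (of_real r2 * cis \<eta> * sin t)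
       = (of_real r2 * cis \<eta> * cos t) * (of_real r1 * cis \<eta> * cos t) + (- of_real r2 * cis \<phi> * sin t) * (of_real r1 * cis \<eta> * sin t)"
      unfolding A' B' by simp
    then have "(of_real (r1 * r2 * sin t * sin t) * cis \<eta>) * (cis \<phi> - cis \<theta>) = 0"
      by (simp add: algebra_simps)
    moreover have "sin t \<noteq> 0" using sin_gt_zero[OF t] by simp
    ultimately have "cis \<phi> = cis \<theta>" using r by simp
    then show False using cis_inj ang by metis
  qed
  then show ?thesis using n by simp
qed



lemma smult_v2[simp]: "c *s v2 x y = v2 (c * x) (c * y)"
  by (simp add: vec_eq_iff forall_2)

lemma scaleR_v2[simp]: "c *\<^sub>R v2 x y = v2 (of_real c * x) (of_real c * y)"
  unfolding vec_eq_iff forall_2 vector_scaleR_component by (simp add: scaleR_conv_of_real)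

lemma norm_smult: "norm (c *s (y::complex^2)) = cmod c * norm y"
proof -
  obtain y1 y2 where y: "y = v2 y1 y2" using v2_eta by blast
  show ?thesis unfolding y smult_v2 norm_v2
    by (simp add: norm_mult power_mult_distrib real_sqrt_mult flip: distrib_left)
qed

lemma opnorm_attained: "\<exists>x. norm x = 1 \<and> norm (M *v x) = opnorm2 M"
proof -
  have "continuous_on (sphere 0 1) (\<lambda>x::complex^2. norm (M *v x))"
    by (intro continuous_intros linear_continuous_on) simp
  moreover have "sphere (0::complex^2) 1 \<noteq> {}" by simp
  ultimately obtain x where x: "x \<in> sphere 0 1" and mx: "\<forall>y\<in>sphere 0 1. norm (M *v y) \<le> norm (M *v x)"
    using continuous_attains_sup[OF compact_sphere] by blast
  have nx: "norm x = 1" using x by simp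
  have "opnorm2 M \<le> norm (M *v x)"
  proof (rule opnorm_le)
    fix y :: "complex^2"
    show "norm (M *v y) \<le> norm (M *v x) * norm y"
    proof (cases "y = 0")
      case True then show ?thesis by simp
    next
      case False
      let ?z = "(1 / norm y) *\<^sub>R y"
      have "norm ?z = 1" using False by simp
      then have "norm (M *v ?z) \<le> norm (M *v x)" using mx by simp
      moreover have "M *v ?z = (1 / norm y) *\<^sub>R (M *v y)"
        by (simp add: matrix_vector_mult_def vec_eq_iff scaleR_sum_right)
      ultimately have "norm (M *v y) / norm y \<le> norm (M *v x)" by simp
      then show ?thesis using False by (simp add: divide_le_eq mult.commute)
    qed
  qed
  moreover have "norm (M *v x) \<le> opnorm2 M" using opnorm_ge[of M x] nx by simp
  ultimately show ?thesis using nx by (intro exI[of _ x]) simp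
qed

lemma opnorm_pos: assumes "A \<noteq> 0" shows "opnorm2 A > 0"
proof (rule ccontr)
  assume "\<not> opnorm2 A > 0"
  then have "opnorm2 A \<le> 0" by simp
  then have z: "\<And>y. norm (A *v y) \<le> 0"
    by (metis mult_nonpos_nonneg norm_ge_zero opnorm_ge order_trans)
  obtain a b c d where A: "A = mat2 a b c d" using mat2_ex by blast
  have "A *v v2 1 0 = 0" "A *v v2 0 1 = 0" using z[of "v2 1 0"] z[of "v2 0 1"] by simp_all
  then have "A = 0" unfolding A by (simp add: mat2_zero vec_eq_iff forall_2)
  then show False using assms by simp
qed

lemma angle_exists: assumes "cmod z = 1" shows "\<exists>\<theta>. 0 \<le> \<theta> \<and> \<theta> < 2 * pi \<and> cis \<theta> = z"
proof -
  have z0: "z \<noteq> 0" using assms by auto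
  have c: "cis (Arg z) = z" using cis_Arg[OF z0] assms by (simp add: sgn_div_norm)
  have b: "- pi < Arg z" "Arg z \<le> pi" using Arg_bounded by auto
  show ?thesis
  proof (cases "Arg z \<ge> 0")
    case True then show ?thesis using c b by (intro exI[of _ "Arg z"]) auto
  next
    case False
    have "cis (Arg z + 2 * pi) = cis (Arg z)" by (simp add: complex_eq_iff)
    then show ?thesis using c b False by (intro exI[of _ "Arg z + 2 * pi"]) auto
  qed
qed

lemma eigen_exists: "\<exists>(y::complex^2) l. norm y = 1 \<and> (M::cmat2) *v y = l *s y"
proof -
  obtain p q r s where M: "M = mat2 p q r s" using mat2_ex by blast
  show ?thesis
  proof (cases "q = 0")
    case True
    then show ?thesis unfolding M
      by (intro exI[of _ "v2 0 1"] exI[of _ s]) (simp add: norm_v2)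
  next
    case False
    define l where "l = ((p + s) + csqrt ((p + s)^2 - 4 * (p * s - q * r))) / 2"
    have quad: "l * l - (p + s) * l + (p * s - q * r) = 0"
    proof -
      have "2 * l - (p + s) = csqrt ((p + s)^2 - 4 * (p * s - q * r))"
        unfolding l_def by (simp add: field_simps)
      then have "(2 * l - (p + s))^2 = (p + s)^2 - 4 * (p * s - q * r)"
        by simp
      then have "4 * (l * l - (p + s) * l + (p * s - q * r)) = 0"
        by (simp add: algebra_simps power2_eq_square)
      then show ?thesis by (metis mult_eq_0_iff zero_neq_numeral)
    qed
    define n where "n = sqrt (cmod q ^ 2 + cmod (l - p) ^ 2)"
    have n0: "n > 0" unfolding n_def using False by (simp add: add_pos_nonneg)
    define k where "k = complex_of_real (1 / n)"
    have ny: "norm (v2 (k * q) (k * (l - p))) = 1"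
    proof -
      have ck: "cmod k = 1 / n" unfolding k_def using n0 by (simp add: norm_divide)
      have nn: "n ^ 2 = cmod q ^ 2 + cmod (l - p) ^ 2" unfolding n_def by simp
      show ?thesis unfolding norm_v2 cmod_sq_mult ck using n0
        by (simp add: power_divide add_divide_distrib[symmetric] nn[symmetric])
    qed
    have "M *v v2 (k * q) (k * (l - p)) = l *s v2 (k * q) (k * (l - p))"
      unfolding M mat2_mv smult_v2 v2_inject
    proof
      show "p * (k * q) + q * (k * (l - p)) = l * (k * q)" by (simp add: algebra_simps)
      have "r * (k * q) + s * (k * (l - p)) - l * (k * (l - p)) = - k * (l * l - (p + s) * l + (p * s - q * r))"
        by (simp add: algebra_simps)
      then show "r * (k * q) + s * (k * (l - p)) = l * (k * (l - p))" using quad by simp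
    qed
    then show ?thesis using ny by blast
  qed
qed



lemma structure2:
  fixes a :: real
  assumes a: "a > 0" and v: "cmod w1 ^ 2 + cmod w2 ^ 2 = 1"
    and N: "normal2 (mat2 (of_real a * w1) p (of_real a * w2) q)"
    and bd: "\<And>y. norm (mat2 (of_real a * w1) p (of_real a * w2) q *v y) \<le> a * norm y"
  shows "(w2 = 0 \<and> p = 0 \<and> cmod q \<le> a) \<or>
         (w2 \<noteq> 0 \<and> (\<exists>\<omega>. cmod \<omega> = 1 \<and> p = - \<omega> * of_real a * cnj w2 \<and> q = \<omega> * of_real a * cnj w1))"
proof -
  let ?M = "mat2 (of_real a * w1) p (of_real a * w2) q"
  have e11: "(of_real a * w1) * cnj (of_real a * w1) + p * cnj p
      = cnj (of_real a * w1) * (of_real a * w1) + cnj (of_real a * w2) * (of_real a * w2)"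
    using N unfolding normal2_def by simp
  then have "cnj p * p = cnj (of_real a * w2) * (of_real a * w2)"
    by (simp add: algebra_simps)
  then have "complex_of_real (cmod p ^ 2) = complex_of_real (cmod (of_real a * w2) ^ 2)"
    by (simp only: cmod_sq_eq)
  then have "cmod p ^ 2 = cmod (of_real a * w2) ^ 2" by (metis of_real_eq_iff)
  then have pn: "cmod p = a * cmod w2" using a
    by (simp add: norm_mult power2_eq_iff_nonneg)
  define c where "c = cnj w1 * p + cnj w2 * q"
  define s where "s = 1 / a"
  define C where "C = cmod c ^ 2"
  have as: "a * s = 1" unfolding s_def using a by simp
  let ?y = "v2 1 (of_real s * cnj c)"
  have inner: "cnj 1 * (of_real s * cnj c) * (cnj (of_real a * w1) * p + cnj (of_real a * w2) * q)
      = of_real (a * s) * (cnj c * c)"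
    unfolding c_def by (simp add: algebra_simps)
  have "Re (cnj 1 * (of_real s * cnj c) * (cnj (of_real a * w1) * p + cnj (of_real a * w2) * q)) = C"
    unfolding inner as C_def by (simp flip: cmod_sq_eq)
  moreover have "cmod (of_real a * w1) ^ 2 + cmod (of_real a * w2) ^ 2 = a ^ 2"
    using v a by (simp add: norm_mult power_mult_distrib flip: distrib_left)
  moreover have cy: "cmod (of_real s * cnj c) ^ 2 = s ^ 2 * C"
    unfolding C_def by (simp add: norm_mult power_mult_distrib)
  ultimately have nM: "norm (?M *v ?y) ^ 2 = a ^ 2 + (cmod p ^ 2 + cmod q ^ 2) * (s ^ 2 * C) + 2 * C"
    unfolding quad_form by simp
  have ny: "norm ?y ^ 2 = 1 + s ^ 2 * C" unfolding norm_v2 using cy by (simp add: C_def)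
  have "norm (?M *v ?y) ^ 2 \<le> (a * norm ?y) ^ 2"
    using bd[of ?y] by (simp add: power_mono)
  also have "\<dots> = a ^ 2 + (a * s) ^ 2 * C" unfolding power_mult_distrib ny by (simp add: algebra_simps)
  finally have "(cmod p ^ 2 + cmod q ^ 2) * (s ^ 2 * C) + C \<le> 0"
    unfolding nM as by simp
  moreover have "0 \<le> (cmod p ^ 2 + cmod q ^ 2) * (s ^ 2 * C)" unfolding C_def by simp
  moreover have "C \<ge> 0" unfolding C_def by simp
  ultimately have "C = 0" by linarith
  then have c0: "cnj w1 * p + cnj w2 * q = 0" unfolding C_def c_def by simp
  show ?thesis
  proof (cases "w2 = 0")
    case True
    then have p0: "p = 0" using pn by simp
    have "norm (?M *v v2 0 1) \<le> a" using bd[of "v2 0 1"] by (simp add: norm_v2)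
    then have "cmod q \<le> a" using p0 by (simp add: norm_v2)
    then show ?thesis using True p0 by simp
  next
    case False
    define \<omega> where "\<omega> = - p / (of_real a * cnj w2)"
    have d0: "of_real a * cnj w2 \<noteq> 0" using False a by simp
    have "cmod \<omega> = 1" unfolding \<omega>_def using pn False a by (simp add: norm_divide norm_mult)
    moreover have "p = - \<omega> * of_real a * cnj w2" unfolding \<omega>_def using d0 by (simp add: field_simps)
    moreover have "q = \<omega> * of_real a * cnj w1"
    proof -
      have "cnj w2 * q = - cnj w1 * p" using c0 by (simp add: algebra_simps eq_neg_iff_add_eq_0)
      then show ?thesis unfolding \<omega>_def using d0 False by (simp add: field_simps)
    qed
    ultimately show ?thesis using False by blast
  qed
qed



definition ub :: "complex^2 \<Rightarrow> cmat2" where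
  "ub x = mat2 (x$1) (- cnj (x$2)) (x$2) (cnj (x$1))"

lemma unit_coords: assumes "norm (x::complex^2) = 1"
  shows "cmod (x$1) ^ 2 + cmod (x$2) ^ 2 = 1"
proof -
  have "norm (v2 (x$1) (x$2)) = 1" using assms v2_eta[of x] by simp
  then show ?thesis unfolding norm_v2 by simp
qed

lemma sq1_complex: assumes "cmod a ^ 2 + cmod b ^ 2 = 1" shows "cnj a * a + cnj b * b = 1"
proof -
  have "complex_of_real (cmod a ^ 2 + cmod b ^ 2) = 1" using assms by simp
  then show ?thesis by (simp only: of_real_add cmod_sq_eq)
qed

lemma ub_unitary: assumes "norm x = 1" shows "unitary2 (ub x)"
proof -
  have e: "cnj (x$1) * x$1 + cnj (x$2) * x$2 = 1" using sq1_complex[OF unit_coords[OF assms]] .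
  show ?thesis unfolding unitary2_def ub_def mat2_one using e by (simp add: algebra_simps)
qed

lemma ub_e1: "ub x *v v2 1 0 = x"
  unfolding ub_def by (subst (2) v2_eta) simp

lemma mv_smult: "(M::cmat2) *v (c *s y) = c *s (M *v y)"
proof -
  obtain a b d e where M: "M = mat2 a b d e" using mat2_ex by blast
  obtain y1 y2 where y: "y = v2 y1 y2" using v2_eta by blast
  show ?thesis unfolding M y by (simp add: algebra_simps)
qed

lemma smult_smult: "(c::complex) *s (d *s (y::complex^2)) = (c * d) *s y"
proof -
  obtain y1 y2 where y: "y = v2 y1 y2" using v2_eta by blast
  show ?thesis unfolding y by (simp add: algebra_simps)
qed

lemma reduction:
  assumes N: "normal2 A" and a: "a = opnorm2 A" "a > 0" and x: "norm x = 1" and u: "norm u = 1"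
    and Ax: "A *v x = of_real a *s u"
  defines "v \<equiv> cadj (ub x) *v u"
  shows "\<exists>p q. cadj (ub x) ** A ** ub x = mat2 (of_real a * v$1) p (of_real a * v$2) q \<and>
     ((v$2 = 0 \<and> p = 0 \<and> cmod q \<le> a) \<or>
      (v$2 \<noteq> 0 \<and> (\<exists>\<omega>. cmod \<omega> = 1 \<and> p = - \<omega> * of_real a * cnj (v$2) \<and> q = \<omega> * of_real a * cnj (v$1))))"
proof -
  let ?U = "ub x"
  let ?A = "cadj ?U ** A ** ?U"
  have U: "unitary2 ?U" by (rule ub_unitary[OF x])
  have U': "unitary2 (cadj ?U)" using U unfolding unitary2_def by simp
  have "?A *v v2 1 0 = cadj ?U *v (A *v (?U *v v2 1 0))"
    by (simp add: matrix_vector_mul_assoc matrix_mul_assoc)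
  also have "\<dots> = of_real a *s v" unfolding ub_e1 Ax mv_smult v_def ..
  finally have col: "?A *v v2 1 0 = of_real a *s v" .
  have "?A = mat2 (?A$1$1) (?A$1$2) (?A$2$1) (?A$2$2)" by (rule mat2_eta)
  moreover have "?A$1$1 = of_real a * v$1" "?A$2$1 = of_real a * v$2"
  proof -
    have "v2 (?A$1$1) (?A$2$1) = v2 (of_real a * v$1) (of_real a * v$2)"
      using col by (subst (asm) mat2_eta) (subst (asm) (2) v2_eta, simp)
    then show "?A$1$1 = of_real a * v$1" "?A$2$1 = of_real a * v$2" by simp_all
  qed
  ultimately have "\<exists>p q. ?A = mat2 (of_real a * v$1) p (of_real a * v$2) q" by metis
  then obtain p q where Aeq: "?A = mat2 (of_real a * v$1) p (of_real a * v$2) q" by blast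
  have nv: "norm v = 1" unfolding v_def using unitary_norm[OF U'] u by simp
  have NA: "normal2 ?A" by (rule normal_conj[OF U N])
  have bd: "\<And>y. norm (?A *v y) \<le> a * norm y" using opnorm_ge[of ?A] opnorm_conj[OF U, of A] a by simp
  have S: "(v$2 = 0 \<and> p = 0 \<and> cmod q \<le> a) \<or>
      (v$2 \<noteq> 0 \<and> (\<exists>\<omega>. cmod \<omega> = 1 \<and> p = - \<omega> * of_real a * cnj (v$2) \<and> q = \<omega> * of_real a * cnj (v$1)))"
    by (rule structure2[OF a(2) unit_coords[OF nv] NA[unfolded Aeq] bd[unfolded Aeq]])
  show ?thesis using Aeq S by blast
qed



lemma cnj_inv: "cmod (e::complex) = 1 \<Longrightarrow> cnj e = inverse e"
proof -
  assume "cmod e = 1"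
  then have "e * cnj e = 1" using complex_norm_square[of e] by simp
  then show ?thesis by (simp add: inverse_unique)
qed

lemma n1b: "(n1::real) ^ 2 + n2 ^ 2 = 1 \<Longrightarrow> n2 > 0 \<Longrightarrow> n1 < 1"
proof -
  assume h: "n1 ^ 2 + n2 ^ 2 = 1" "n2 > 0"
  have "n2 ^ 2 > 0" using h by simp
  then have "n1 ^ 2 < 1" using h(1) by linarith
  then have "n1 ^ 2 < 1 ^ 2" by simp
  then show "n1 < 1" by (rule power2_less_imp_less) simp
qed


lemma aligned_from:
  assumes U: "unitary2 U" and a: "a > 0" and b: "b > 0" and w: "cmod w = 1"
    and A': "cadj U ** A ** U = mat2 (of_real a * w) 0 0 qA" and qa: "cmod qA \<le> a"
    and B': "cadj U ** B ** U = mat2 (of_real b * w) 0 0 qB" and qb: "cmod qB \<le> b"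
  shows "aligned A B"
proof -
  obtain \<eta> where e: "0 \<le> \<eta>" "\<eta> < 2 * pi" "cis \<eta> = w" using angle_exists[OF w] by blast
  have w0: "w \<noteq> 0" using w by auto
  define t1 where "t1 = qA / (of_real a * w)"
  define t2 where "t2 = qB / (of_real b * w)"
  have q1: "of_real a * w * t1 = qA" unfolding t1_def using w0 a by (simp add: field_simps)
  have q2: "of_real b * w * t2 = qB" unfolding t2_def using w0 b by (simp add: field_simps)
  have m1: "cmod t1 \<le> 1" unfolding t1_def using w a qa by (simp add: norm_divide norm_mult)
  have m2: "cmod t2 \<le> 1" unfolding t2_def using w b qb by (simp add: norm_divide norm_mult)
  show ?thesis unfolding aligned_def
    apply (rule exI[of _ U], rule exI[of _ a], rule exI[of _ b], rule exI[of _ \<eta>], rule exI[of _ t1], rule exI[of _ t2])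
    using U a b e(1,2) m1 m2 A' B' q1 q2 unfolding e(3) by simp
qed

lemma unitary_mult: assumes "unitary2 U" "unitary2 D" shows "unitary2 (U ** D)"
  using assms unfolding unitary2_def
  by (simp add: cadj_mult matrix_mul_assoc unitary_l unitary_r unitary_1 assms)

lemma skew_from:
  assumes U: "unitary2 U" and a: "a > 0" and b: "b > 0" and w: "cmod w1 ^ 2 + cmod w2 ^ 2 = 1" and w2: "w2 \<noteq> 0"
    and o1: "cmod \<omega>1 = 1" and o2: "cmod \<omega>2 = 1" and o12: "\<omega>1 \<noteq> \<omega>2"
    and A': "cadj U ** A ** U = mat2 (of_real a * w1) (- \<omega>1 * of_real a * cnj w2) (of_real a * w2) (\<omega>1 * of_real a * cnj w1)"
    and B': "cadj U ** B ** U = mat2 (of_real b * w1) (- \<omega>2 * of_real b * cnj w2) (of_real b * w2) (\<omega>2 * of_real b * cnj w1)"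
  shows "skew_aligned A B"
proof -
  define n1 where "n1 = cmod w1"
  define n2 where "n2 = cmod w2"
  have n2p: "n2 > 0" unfolding n2_def using w2 by simp
  define e where "e = (if w1 = 0 then w2 / of_real n2 else w1 / of_real n1)"
  have ce: "cmod e = 1" unfolding e_def n1_def n2_def using w2 by (simp add: norm_divide)
  have e0: "e \<noteq> 0" using ce by auto
  have w1e: "w1 = of_real n1 * e" unfolding e_def n1_def by auto
  define \<delta> where "\<delta> = w2 / (of_real n2 * e)"
  have cd: "cmod \<delta> = 1" unfolding \<delta>_def using ce n2p by (simp add: norm_divide norm_mult n2_def)
  have d0: "\<delta> \<noteq> 0" using cd by auto
  have w2e: "w2 = of_real n2 * e * \<delta>" unfolding \<delta>_def using n2p e0 by simp
  have cnje: "cnj e = inverse e" using ce by (rule cnj_inv)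
  have cnjd: "cnj \<delta> = inverse \<delta>" using cd by (rule cnj_inv)
  define D where "D = mat2 1 0 0 \<delta>"
  have Du: "unitary2 D" unfolding unitary2_def D_def mat2_one using cnjd d0 by simp
  have V: "unitary2 (U ** D)" by (rule unitary_mult[OF U Du])
  have conjD: "\<And>X. cadj (U ** D) ** X ** (U ** D) = cadj D ** (cadj U ** X ** U) ** D"
    by (simp add: cadj_mult matrix_mul_assoc)
  have n12: "n1 ^ 2 + n2 ^ 2 = 1" using w unfolding n1_def n2_def .
  have n1b: "0 \<le> n1" "n1 < 1" using n12 n2p unfolding n1_def
    using n1b by auto
  define t where "t = arccos n1"
  have ct: "cos t = n1" unfolding t_def using n1b by simp
  have st: "sin t = n2" unfolding t_def using n1b n12 n2p
    by (simp add: sin_arccos real_sqrt_unique)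
  have tb: "0 < t" "t < pi" unfolding t_def using arccos_lt_bounded[of n1] n1b by auto
  obtain \<eta> where eta: "0 \<le> \<eta>" "\<eta> < 2 * pi" "cis \<eta> = e" using angle_exists[OF ce] by blast
  have c1: "cmod (\<omega>1 * cnj e) = 1" using o1 ce by (simp add: norm_mult)
  have c2: "cmod (\<omega>2 * cnj e) = 1" using o2 ce by (simp add: norm_mult)
  obtain \<theta> where th: "0 \<le> \<theta>" "\<theta> < 2 * pi" "cis \<theta> = \<omega>1 * cnj e" using angle_exists[OF c1] by blast
  obtain \<phi> where ph: "0 \<le> \<phi>" "\<phi> < 2 * pi" "cis \<phi> = \<omega>2 * cnj e" using angle_exists[OF c2] by blast
  have "\<phi> \<noteq> \<theta>" using th ph o12 e0 by auto
  have Dconj: "\<And>p q r s. cadj D ** mat2 p q r s ** D = mat2 p (q * \<delta>) (cnj \<delta> * r) (cnj \<delta> * s * \<delta>)"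
    unfolding D_def by simp
  have dd: "cnj \<delta> * \<delta> = 1" using cnjd d0 by simp
  have ee: "cnj e * e = 1" using cnje e0 by simp
  have cv2: "cnj w2 = of_real n2 * cnj e * cnj \<delta>" unfolding w2e by simp
  have cv1: "cnj w1 = of_real n1 * cnj e" unfolding w1e by simp
  have EA: "cadj (U ** D) ** A ** (U ** D) = mat2 (of_real a * cis \<eta> * cos t) (- of_real a * cis \<theta> * sin t)
                             (of_real a * cis \<eta> * sin t) (of_real a * cis \<theta> * cos t)"
    unfolding conjD A' Dconj ct st eta(3) th(3) mat2_inject
  proof (intro conjI)
    show "complex_of_real a * w1 = complex_of_real a * e * complex_of_real n1" unfolding w1e by simp
    show "- \<omega>1 * complex_of_real a * cnj w2 * \<delta> = - complex_of_real a * (\<omega>1 * cnj e) * complex_of_real n2"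
      unfolding cv2 using dd by (simp add: algebra_simps)
    show "cnj \<delta> * (complex_of_real a * w2) = complex_of_real a * e * complex_of_real n2"
      unfolding w2e using dd by (simp add: algebra_simps)
    show "cnj \<delta> * (\<omega>1 * complex_of_real a * cnj w1) * \<delta> = complex_of_real a * (\<omega>1 * cnj e) * complex_of_real n1"
      unfolding cv1 using dd by (simp add: algebra_simps)
  qed
  have EB: "cadj (U ** D) ** B ** (U ** D) = mat2 (of_real b * cis \<eta> * cos t) (- of_real b * cis \<phi> * sin t)
                             (of_real b * cis \<eta> * sin t) (of_real b * cis \<phi> * cos t)"
    unfolding conjD B' Dconj ct st eta(3) ph(3) mat2_inject
  proof (intro conjI)
    show "complex_of_real b * w1 = complex_of_real b * e * complex_of_real n1" unfolding w1e by simp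
    show "- \<omega>2 * complex_of_real b * cnj w2 * \<delta> = - complex_of_real b * (\<omega>2 * cnj e) * complex_of_real n2"
      unfolding cv2 using dd by (simp add: algebra_simps)
    show "cnj \<delta> * (complex_of_real b * w2) = complex_of_real b * e * complex_of_real n2"
      unfolding w2e using dd by (simp add: algebra_simps)
    show "cnj \<delta> * (\<omega>2 * complex_of_real b * cnj w1) * \<delta> = complex_of_real b * (\<omega>2 * cnj e) * complex_of_real n1"
      unfolding cv1 using dd by (simp add: algebra_simps)
  qed
  show ?thesis unfolding skew_aligned_def
    using V a b tb eta th ph \<open>\<phi> \<noteq> \<theta>\<close> EA EB by blast
qed



lemma scaleR_smult: "c *\<^sub>R (y::complex^2) = of_real c *s y"
proof -
  obtain y1 y2 where y: "y = v2 y1 y2" using v2_eta by blast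
  show ?thesis unfolding y by simp
qed

lemma ub_cadj: "cadj (ub x) = mat2 (cnj (x$1)) (cnj (x$2)) (- (x$2)) (x$1)"
  unfolding ub_def by simp

lemma aligned_par:
  assumes NA: "normal2 A" and NB: "normal2 B" and a: "a = opnorm2 A" "a > 0" and b: "b = opnorm2 B" "b > 0"
    and x: "norm x = 1" and z: "cmod \<zeta> = 1"
    and Ax: "A *v x = (of_real a * \<zeta>) *s x" and Bx: "B *v x = (of_real b * \<zeta>) *s x"
  shows "aligned A B"
proof -
  define u where "u = \<zeta> *s x"
  have nu: "norm u = 1" unfolding u_def norm_smult using z x by simp
  have Au: "A *v x = of_real a *s u" unfolding u_def smult_smult Ax ..
  have Bu: "B *v x = of_real b *s u" unfolding u_def smult_smult Bx ..
  define v where "v = cadj (ub x) *v u"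
  have v2z: "v$2 = 0" unfolding v_def u_def ub_cadj by (subst (2) v2_eta[of x]) (simp add: algebra_simps)
  have nv: "norm v = 1" unfolding v_def using unitary_norm[of "cadj (ub x)" u] ub_unitary[OF x] nu
    by (simp add: unitary2_def)
  have "cmod (v$1) ^ 2 = 1 ^ 2" using unit_coords[OF nv] v2z by simp
  then have v1: "cmod (v$1) = 1" using power2_eq_iff_nonneg[of "cmod (v$1)" 1] by simp
  obtain pA qA where RA: "cadj (ub x) ** A ** ub x = mat2 (of_real a * v$1) pA (of_real a * v$2) qA"
    and SA: "(v$2 = 0 \<and> pA = 0 \<and> cmod qA \<le> a) \<or> (v$2 \<noteq> 0 \<and> (\<exists>\<omega>. cmod \<omega> = 1 \<and> pA = - \<omega> * of_real a * cnj (v$2) \<and> qA = \<omega> * of_real a * cnj (v$1)))"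
    using reduction[OF NA a x nu Au] unfolding v_def by blast
  obtain pB qB where RB: "cadj (ub x) ** B ** ub x = mat2 (of_real b * v$1) pB (of_real b * v$2) qB"
    and SB: "(v$2 = 0 \<and> pB = 0 \<and> cmod qB \<le> b) \<or> (v$2 \<noteq> 0 \<and> (\<exists>\<omega>. cmod \<omega> = 1 \<and> pB = - \<omega> * of_real b * cnj (v$2) \<and> qB = \<omega> * of_real b * cnj (v$1)))"
    using reduction[OF NB b x nu Bu] unfolding v_def by blast
  show ?thesis
    using aligned_from[OF ub_unitary[OF x] a(2) b(2) v1, of A qA B qB] RA RB SA SB v2z by simp
qed

lemma forward:
  assumes A0: "A \<noteq> 0" and B0: "B \<noteq> 0" and NA: "normal2 A" and NB: "normal2 B"
    and eq: "opnorm2 (A + B) = opnorm2 A + opnorm2 B"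
  shows "aligned A B \<or> skew_aligned A B"
proof -
  define a where "a = opnorm2 A"
  define b where "b = opnorm2 B"
  have a0: "a > 0" unfolding a_def by (rule opnorm_pos[OF A0])
  have b0: "b > 0" unfolding b_def by (rule opnorm_pos[OF B0])
  obtain x where x: "norm x = 1" and nx: "norm ((A + B) *v x) = opnorm2 (A + B)"
    using opnorm_attained by blast
  have s: "(A + B) *v x = A *v x + B *v x" by (simp add: matrix_vector_mult_add_rdistrib)
  have la: "norm (A *v x) \<le> a" using opnorm_ge[of A x] x unfolding a_def by simp
  have lb: "norm (B *v x) \<le> b" using opnorm_ge[of B x] x unfolding b_def by simp
  have tri: "norm (A *v x + B *v x) \<le> norm (A *v x) + norm (B *v x)" by (rule norm_triangle_ineq)
  have sumeq: "norm (A *v x + B *v x) = a + b" using nx eq s unfolding a_def b_def by simp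
  have na: "norm (A *v x) = a" using la lb tri sumeq by linarith
  have nb: "norm (B *v x) = b" using la lb tri sumeq by linarith
  have "norm (A *v x) *\<^sub>R (B *v x) = norm (B *v x) *\<^sub>R (A *v x)"
    using norm_triangle_eq[of "A *v x" "B *v x"] sumeq na nb by simp
  then have ab: "of_real a *s (B *v x) = of_real b *s (A *v x)" unfolding na nb scaleR_smult .
  define u where "u = of_real (1 / a) *s (A *v x)"
  have Au: "A *v x = of_real a *s u" unfolding u_def smult_smult using a0 by simp
  have Bu: "B *v x = of_real b *s u"
  proof -
    have "of_real (1 / a) *s (of_real a *s (B *v x)) = of_real (1 / a) *s (of_real b *s (A *v x))"
      using ab by simp
    then show ?thesis unfolding u_def smult_smult using a0 by (simp add: mult.commute)
  qed
  have nu: "norm u = 1" unfolding u_def norm_smult na using a0 by (simp add: norm_divide)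
  define v where "v = cadj (ub x) *v u"
  let ?U = "ub x"
  have U: "unitary2 ?U" by (rule ub_unitary[OF x])
  have nv: "norm v = 1" unfolding v_def using unitary_norm[of "cadj ?U" u] U nu
    by (simp add: unitary2_def)
  have vv: "cmod (v$1) ^ 2 + cmod (v$2) ^ 2 = 1" by (rule unit_coords[OF nv])
  obtain pA qA where RA: "cadj ?U ** A ** ?U = mat2 (of_real a * v$1) pA (of_real a * v$2) qA"
    and SA: "(v$2 = 0 \<and> pA = 0 \<and> cmod qA \<le> a) \<or> (v$2 \<noteq> 0 \<and> (\<exists>\<omega>. cmod \<omega> = 1 \<and> pA = - \<omega> * of_real a * cnj (v$2) \<and> qA = \<omega> * of_real a * cnj (v$1)))"
    using reduction[OF NA a_def a0 x nu Au] unfolding v_def by blast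
  obtain pB qB where RB: "cadj ?U ** B ** ?U = mat2 (of_real b * v$1) pB (of_real b * v$2) qB"
    and SB: "(v$2 = 0 \<and> pB = 0 \<and> cmod qB \<le> b) \<or> (v$2 \<noteq> 0 \<and> (\<exists>\<omega>. cmod \<omega> = 1 \<and> pB = - \<omega> * of_real b * cnj (v$2) \<and> qB = \<omega> * of_real b * cnj (v$1)))"
    using reduction[OF NB b_def b0 x nu Bu] unfolding v_def by blast
  show ?thesis
  proof (cases "v$2 = 0")
    case True
    have "cmod (v$1) ^ 2 = 1 ^ 2" using vv True by simp
    then have v1: "cmod (v$1) = 1" using power2_eq_iff_nonneg[of "cmod (v$1)" 1] by simp
    show ?thesis
      using aligned_from[OF U a0 b0 v1, of A qA B qB] RA RB SA SB True by simp
  next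
    case False
    obtain \<omega>1 where o1: "cmod \<omega>1 = 1" and A': "cadj ?U ** A ** ?U = mat2 (of_real a * v$1) (- \<omega>1 * of_real a * cnj (v$2)) (of_real a * v$2) (\<omega>1 * of_real a * cnj (v$1))"
      using SA RA False by blast
    obtain \<omega>2 where o2: "cmod \<omega>2 = 1" and B': "cadj ?U ** B ** ?U = mat2 (of_real b * v$1) (- \<omega>2 * of_real b * cnj (v$2)) (of_real b * v$2) (\<omega>2 * of_real b * cnj (v$1))"
      using SB RB False by blast
    show ?thesis
    proof (cases "\<omega>1 = \<omega>2")
      case False
      then show ?thesis using skew_from[OF U a0 b0 vv \<open>v$2 \<noteq> 0\<close> o1 o2 False A' B'] by simp
    next
      case True
      define V where "V = mat2 (v$1) (- \<omega>1 * cnj (v$2)) (v$2) (\<omega>1 * cnj (v$1))"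
      obtain y' l where ny': "norm y' = 1" and ey: "V *v y' = l *s y'" using eigen_exists[of V] by blast
      have Vn: "norm (V *v y') = norm y'"
      proof -
        obtain s t where y': "y' = v2 s t" using v2_eta by blast
        have c2: "cmod (- \<omega>1 * cnj (v$2)) ^ 2 + cmod (\<omega>1 * cnj (v$1)) ^ 2 = 1"
          using vv o1 by (simp add: norm_mult)
        have "norm (V *v y') ^ 2 = norm y' ^ 2" unfolding V_def y' quad_form vv c2
          by (simp add: norm_v2 algebra_simps)
        then show ?thesis by (simp add: power2_eq_iff_nonneg)
      qed
      have l1: "cmod l = 1" using Vn ny' unfolding ey norm_smult by simp
      define y where "y = ?U *v y'"
      have ny: "norm y = 1" unfolding y_def using unitary_norm[OF U] ny' by simp
      have gen: "\<And>M c. cadj ?U ** M ** ?U = mat2 (of_real c * v$1) (- \<omega>1 * of_real c * cnj (v$2)) (of_real c * v$2) (\<omega>1 * of_real c * cnj (v$1))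
          \<Longrightarrow> M *v y = (of_real c * l) *s y"
      proof -
        fix M c
        assume M': "cadj ?U ** M ** ?U = mat2 (of_real c * v$1) (- \<omega>1 * of_real c * cnj (v$2)) (of_real c * v$2) (\<omega>1 * of_real c * cnj (v$1))"
        have MV: "cadj ?U ** M ** ?U = (\<chi> i j. of_real c * V $ i $ j)"
          unfolding M' V_def by (subst (2) mat2_eta) (simp add: algebra_simps)
        have "M *v y = ?U *v ((cadj ?U ** M ** ?U) *v y')"
          unfolding y_def using U by (simp add: matrix_vector_mul_assoc matrix_mul_assoc unitary_l unitary_r unitary_1)
        also have "(cadj ?U ** M ** ?U) *v y' = of_real c *s (V *v y')"
          unfolding MV by (simp add: matrix_vector_mult_def vec_eq_iff sum_distrib_left mult.assoc)
        also have "\<dots> = (of_real c * l) *s y'" unfolding ey smult_smult ..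
        finally show "M *v y = (of_real c * l) *s y" unfolding y_def mv_smult .
      qed
      have Ay: "A *v y = (of_real a * l) *s y" by (rule gen[OF A'])
      have By: "B *v y = (of_real b * l) *s y" by (rule gen) (use B' True in simp)
      show ?thesis using aligned_par[OF NA NB a_def a0 b_def b0 ny l1 Ay By] by simp
    qed
  qed
qed


theorem lemma5p3:
  fixes A B :: cmat2
  assumes "A \<noteq> 0" and "B \<noteq> 0" and "normal2 A" and "normal2 B"
  shows "(opnorm2 (A + B) = opnorm2 A + opnorm2 B \<longleftrightarrow> aligned A B \<or> skew_aligned A B)
       \<and> \<not> (aligned A B \<and> skew_aligned A B)
       \<and> (aligned A B \<longrightarrow> A ** B = B ** A)
       \<and> (skew_aligned A B \<longrightarrow> A ** B \<noteq> B ** A)"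
  using forward[OF assms] aligned_props[of A B] skew_props[of A B] by blast

end
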